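(* Let $a>0$, let $q$ be a continuous complex-valued function on $[-a,a]$, and let $f,g\in C^{2}(-a,a)\cap C^{1}[-a,a]$ be two solutions of $y''-qy=0$ on $(-a,a)$ which do not vanish anywhere on $[-a,a]$ and are normalized by $f(0)=g(0)=1$. Put $h_f=f'(0)$ and $h_g=g'(0)$, and let $\{\varphi_k^f\}_{k\ge0}$ and $\{\varphi_k^g\}_{k\ge0}$ be the systems of recursive integrals built from $f$ and $g$ respectively (as described in the context, with initial point $x_0=0$). Then \[ \varphi_k^f=\varphi_k^g \quad\text{for every odd } k\in\mathbb{N}, \] and \[ \varphi_k^f=\varphi_k^g+\frac{h_f-h_g}{k+1}\,\varphi_{k+1}^g\quad\text{for every even } k\in\mathbb{N}_0=\{0,1,2,\dots\}. \]
   Context: For a function $F\in C^{2}(-a,a)\cap C^{1}[-a,a]$ not vanishing on $[-a,a]$, define recursively on $[-a,a]$ (with initial point $x_0=0$) \[ X^{(0)}\equiv1,\quad X^{(n)}(x)=n\int_{0}^{x}X^{(n-1)}(s)\,\big(F^{2}(s)\big)^{(-1)^{n}}\,ds,\qquad \widetilde X^{(0)}\equiv1,\quad \widetilde X^{(n)}(x)=n\int_{0}^{x}\widetilde X^{(n-1)}(s)\,\big(F^{2}(s)\big)^{(-1)^{n-1}}\,ds, \] for $n=1,2,\dots$, and set $\varphi_k^F=F\,X^{(k)}$ for $k$ odd and $\varphi_k^F=F\,\widetilde X^{(k)}$ for $k$ even (including $k=0$). *)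

theory Defs
  imports "HOL-Analysis.Analysis"
begin

definition oint :: "real \<Rightarrow> real \<Rightarrow> (real \<Rightarrow> complex) \<Rightarrow> complex" where
  "oint u v h = (if u \<le> v then integral {u..v} h else - integral {v..u} h)"

definition wpow :: "(real \<Rightarrow> complex) \<Rightarrow> nat \<Rightarrow> real \<Rightarrow> complex" where
  "wpow F n s = (if even n then (F s)^2 else inverse ((F s)^2))"

primrec Xf :: "(real \<Rightarrow> complex) \<Rightarrow> nat \<Rightarrow> real \<Rightarrow> complex" where
  "Xf F 0 x = 1"
| "Xf F (Suc n) x = of_nat (Suc n) * oint 0 x (\<lambda>s. Xf F n s * wpow F (Suc n) s)"

text \<open>tilde X uses the exponent (-1)^(n-1), i.e. wpow with index n+1 (same parity as n-1).\<close>
primrec Xt :: "(real \<Rightarrow> complex) \<Rightarrow> nat \<Rightarrow> real \<Rightarrow> complex" where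
  "Xt F 0 x = 1"
| "Xt F (Suc n) x = of_nat (Suc n) * oint 0 x (\<lambda>s. Xt F n s * wpow F n s)"

definition phi :: "(real \<Rightarrow> complex) \<Rightarrow> nat \<Rightarrow> real \<Rightarrow> complex" where
  "phi F k x = (if odd k then F x * Xf F k x else F x * Xt F k x)"

definition is_solution :: "real \<Rightarrow> (real \<Rightarrow> complex) \<Rightarrow> (real \<Rightarrow> complex) \<Rightarrow> (real \<Rightarrow> complex)
    \<Rightarrow> (real \<Rightarrow> complex) \<Rightarrow> bool" where
  "is_solution a q y y1 y2 \<longleftrightarrow>
     (\<forall>x\<in>{-a..a}. (y has_vector_derivative y1 x) (at x within {-a..a})) \<and>
     continuous_on {-a..a} y1 \<and>
     (\<forall>x\<in>{-a<..<a}. (y1 has_vector_derivative y2 x) (at x)) \<and>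
     continuous_on {-a<..<a} y2 \<and>
     (\<forall>x\<in>{-a<..<a}. y2 x - q x * y x = 0)"

end

theory Submission imports Defs begin

lemma vd_eq: "(f has_vector_derivative D) F \<Longrightarrow> D = E \<Longrightarrow> (f has_vector_derivative E) F"
  by simp

lemma vd_inverse:
  fixes h :: "real \<Rightarrow> complex"
  assumes "(h has_vector_derivative h') (at x within S)" "h x \<noteq> 0"
  shows "((\<lambda>x. inverse (h x)) has_vector_derivative (- h' / (h x)^2)) (at x within S)"
proof -
  have "(inverse has_field_derivative - inverse ((h x)^2)) (at (h x) within h ` S)"
    using assms(2) by (auto intro!: derivative_eq_intros simp: power2_eq_square)
  from field_vector_diff_chain_within[OF assms(1) this]
  show ?thesis by (simp add: o_def divide_inverse)
qed

lemma vd_div: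
  fixes h k :: "real \<Rightarrow> complex"
  assumes "(h has_vector_derivative h') (at x within S)" "(k has_vector_derivative k') (at x within S)" "k x \<noteq> 0"
  shows "((\<lambda>x. h x / k x) has_vector_derivative ((h' * k x - h x * k') / (k x)^2)) (at x within S)"
proof -
  have "((\<lambda>x. h x * inverse (k x)) has_vector_derivative (h x * (- k' / (k x)^2) + h' * inverse (k x))) (at x within S)"
    by (intro has_vector_derivative_mult assms vd_inverse)
  then show ?thesis using assms(3) by (simp add: divide_inverse[symmetric]) (simp add: field_simps power2_eq_square)
qed

lemma oint_0 [simp]: "oint 0 0 h = 0"
  by (simp add: oint_def)

lemma oint_deriv:
  fixes h :: "real \<Rightarrow> complex"
  assumes "continuous_on {-a..a} h" "x \<in> {-a..a}" "0 \<le> a"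
  shows "((\<lambda>x. oint 0 x h) has_vector_derivative h x) (at x within {-a..a})"
proof -
  have int: "h integrable_on {-a..a}" using assms(1) by (rule integrable_continuous_real)
  have eq: "oint 0 y h = integral {-a..y} h - integral {-a..0} h" if "y \<in> {-a..a}" for y
  proof (cases "0 \<le> y")
    case True
    have "integral {-a..0} h + integral {0..y} h = integral {-a..y} h"
      using Henstock_Kurzweil_Integration.integral_combine[of "-a" 0 y h] integrable_on_subinterval[of h "{-a..a}" "-a" y, OF int] True that assms by auto
    then show ?thesis using True by (simp add: oint_def algebra_simps)
  next
    case False
    have "integral {-a..y} h + integral {y..0} h = integral {-a..0} h"
      using Henstock_Kurzweil_Integration.integral_combine[of "-a" y 0 h] integrable_on_subinterval[of h "{-a..a}" "-a" 0, OF int] False that assms by auto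
    then show ?thesis using False by (simp add: oint_def algebra_simps)
  qed
  show ?thesis
    by (rule has_vector_derivative_transform[OF assms(2) eq])
       (auto intro!: has_vector_derivative_diff[where g'=0, simplified] integral_has_vector_derivative assms)
qed

lemma uniq:
  fixes F G :: "real \<Rightarrow> complex"
  assumes "\<And>x. x \<in> {-a..a} \<Longrightarrow> (F has_vector_derivative D x) (at x within {-a..a})"
    "\<And>x. x \<in> {-a..a} \<Longrightarrow> (G has_vector_derivative D x) (at x within {-a..a})"
    "F 0 = G 0" "0 \<le> a" "x \<in> {-a..a}"
  shows "F x = G x"
proof -
  have "\<exists>c. \<forall>y\<in>{-a..a}. F y - G y = c"
    apply (rule has_derivative_zero_constant)
     apply simp
    using has_vector_derivative_diff[OF assms(1) assms(2)]
    by (simp add: has_vector_derivative_def)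
  then obtain c where "\<forall>y\<in>{-a..a}. F y - G y = c" by blast
  with assms(3-5) have "F x - G x = F 0 - G 0" by auto
  with assms(3) show ?thesis by simp
qed

lemma wpow_cont:
  assumes "continuous_on S F" "\<forall>x\<in>S. F x \<noteq> 0"
  shows "continuous_on S (wpow F n)"
  unfolding wpow_def using assms by (cases "even n") (auto intro!: continuous_intros)

lemma Xf_props:
  fixes F :: "real \<Rightarrow> complex"
  assumes "continuous_on {-a..a} F" "\<forall>x\<in>{-a..a}. F x \<noteq> 0" "0 \<le> a"
  shows "continuous_on {-a..a} (Xf F n) \<and> (\<forall>x\<in>{-a..a}. (Xf F (Suc n) has_vector_derivative
      (of_nat (Suc n) * (Xf F n x * wpow F (Suc n) x))) (at x within {-a..a}))"
proof (induction n)
  case 0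
  then show ?case
    by (auto simp del: of_nat_Suc intro!: has_vector_derivative_mult_right oint_deriv wpow_cont assms continuous_intros)
next
  case (Suc n)
  have c: "continuous_on {-a..a} (Xf F (Suc n))"
    by (rule continuous_on_vector_derivative) (use Suc in blast)
  show ?case
    apply (rule conjI[OF c])
    apply (subst Xf.simps(2)[abs_def])
    by (auto simp del: of_nat_Suc Xf.simps intro!: has_vector_derivative_mult_right oint_deriv wpow_cont assms continuous_intros c)
qed

lemma Xt_props:
  fixes F :: "real \<Rightarrow> complex"
  assumes "continuous_on {-a..a} F" "\<forall>x\<in>{-a..a}. F x \<noteq> 0" "0 \<le> a"
  shows "continuous_on {-a..a} (Xt F n) \<and> (\<forall>x\<in>{-a..a}. (Xt F (Suc n) has_vector_derivative
      (of_nat (Suc n) * (Xt F n x * wpow F n x))) (at x within {-a..a}))"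
proof (induction n)
  case 0
  then show ?case
    by (auto simp del: of_nat_Suc intro!: has_vector_derivative_mult_right oint_deriv wpow_cont assms continuous_intros)
next
  case (Suc n)
  have c: "continuous_on {-a..a} (Xt F (Suc n))"
    by (rule continuous_on_vector_derivative) (use Suc in blast)
  show ?case
    apply (rule conjI[OF c])
    apply (subst Xt.simps(2)[abs_def])
    by (auto simp del: of_nat_Suc Xt.simps intro!: has_vector_derivative_mult_right oint_deriv wpow_cont assms continuous_intros c)
qed


theorem mainTheorem1:
  fixes a :: real and q f f1 f2 g g1 g2 :: "real \<Rightarrow> complex"
  assumes "a > 0"
    and "continuous_on {-a..a} q"
    and "is_solution a q f f1 f2"
    and "is_solution a q g g1 g2"
    and "\<forall>x\<in>{-a..a}. f x \<noteq> 0"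
    and "\<forall>x\<in>{-a..a}. g x \<noteq> 0"
    and "f 0 = 1" and "g 0 = 1"
  shows "(\<forall>k. odd k \<longrightarrow> (\<forall>x\<in>{-a..a}. phi f k x = phi g k x)) \<and>
         (\<forall>k. even k \<longrightarrow> (\<forall>x\<in>{-a..a}.
             phi f k x = phi g k x + (f1 0 - g1 0) / (of_nat k + 1) * phi g (Suc k) x))"
proof -
  define S where "S = {-a..a}"
  define c where "c = f1 0 - g1 0"
  have a0: "0 \<le> a" using assms(1) by simp
  have zS: "0 \<in> S" using a0 by (simp add: S_def)
  note sf = assms(3)[unfolded is_solution_def] and sg = assms(4)[unfolded is_solution_def]
  have df: "\<And>x. x \<in> S \<Longrightarrow> (f has_vector_derivative f1 x) (at x within S)" using sf[THEN conjunct1] S_def by blast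
  have dg: "\<And>x. x \<in> S \<Longrightarrow> (g has_vector_derivative g1 x) (at x within S)" using sg[THEN conjunct1] S_def by blast
  have cf1: "continuous_on S f1" using sf S_def by blast
  have cg1: "continuous_on S g1" using sg S_def by blast
  have d2f: "\<And>x. x \<in> {-a<..<a} \<Longrightarrow> (f1 has_vector_derivative f2 x) (at x)" using sf by blast
  have d2g: "\<And>x. x \<in> {-a<..<a} \<Longrightarrow> (g1 has_vector_derivative g2 x) (at x)" using sg by blast
  have ef: "\<And>x. x \<in> {-a<..<a} \<Longrightarrow> f2 x = q x * f x" using sf by auto
  have eg: "\<And>x. x \<in> {-a<..<a} \<Longrightarrow> g2 x = q x * g x" using sg by auto
  have cf: "continuous_on S f" by (rule continuous_on_vector_derivative[OF df])
  have cg: "continuous_on S g" by (rule continuous_on_vector_derivative[OF dg])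
  have fnz: "\<And>x. x \<in> S \<Longrightarrow> f x \<noteq> 0" and gnz: "\<And>x. x \<in> S \<Longrightarrow> g x \<noteq> 0"
    using assms(5,6) S_def by auto
  define W where "W x = f1 x * g x - f x * g1 x" for x
  have Wc: "\<And>x. x \<in> S \<Longrightarrow> W x = c"
  proof -
    fix x assume x: "x \<in> S"
    have cW: "continuous_on {-a..a} W" unfolding W_def
      using cf1 cg1 cf cg unfolding S_def by (intro continuous_intros)
    have dW: "(W has_derivative (\<lambda>h. 0)) (at y within {-a..a})" if y: "y \<in> {-a..a} - {-a, a}" for y
    proof -
      have yo: "y \<in> {-a<..<a}" using y by auto
      have sub: "{-a<..<a} \<subseteq> {-a..a}" by auto
      have yS: "y \<in> S" using y S_def by auto
      have fa: "(f has_vector_derivative f1 y) (at y)"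
        using has_vector_derivative_within_subset[OF df[OF yS], of "{-a<..<a}"] has_vector_derivative_within_open[OF yo open_greaterThanLessThan] sub
        unfolding S_def by blast
      have ga: "(g has_vector_derivative g1 y) (at y)"
        using has_vector_derivative_within_subset[OF dg[OF yS], of "{-a<..<a}"] has_vector_derivative_within_open[OF yo open_greaterThanLessThan] sub
        unfolding S_def by blast
      have "(W has_vector_derivative ((f1 y * g1 y + f2 y * g y) - (f y * g2 y + f1 y * g1 y))) (at y)"
        unfolding W_def by (intro has_vector_derivative_diff has_vector_derivative_mult fa ga d2f d2g yo)
      moreover have "(f1 y * g1 y + f2 y * g y) - (f y * g2 y + f1 y * g1 y) = 0"
        using ef[OF yo] eg[OF yo] by (simp add: algebra_simps)
      ultimately have "(W has_vector_derivative 0) (at y)" by simp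
      then show ?thesis unfolding has_vector_derivative_def by (simp add: has_derivative_at_withinI)
    qed
    have xa: "x \<in> {-a..a}" using x S_def by simp
    have "W x = W (-a)"
      by (rule has_derivative_zero_unique_strong_interval[of "{-a,a}" "-a" a W "W (-a)" x, OF _ cW refl dW xa]) simp
    moreover have "W 0 = W (-a)"
      by (rule has_derivative_zero_unique_strong_interval[of "{-a,a}" "-a" a W "W (-a)" 0, OF _ cW refl dW]) (use a0 in auto)
    ultimately show "W x = c" by (simp add: W_def c_def assms(7,8))
  qed
  note XfP = Xf_props[OF cf[unfolded S_def] assms(5) a0, folded S_def]
  note XtP = Xt_props[OF cf[unfolded S_def] assms(5) a0, folded S_def]
  note YP = Xf_props[OF cg[unfolded S_def] assms(6) a0, folded S_def]
  note ZP = Xt_props[OF cg[unfolded S_def] assms(6) a0, folded S_def]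
  define V where "V x = 1 + c * Xf g 1 x" for x
  have dV: "\<And>y. y \<in> S \<Longrightarrow> (V has_vector_derivative (c * inverse ((g y)^2))) (at y within S)"
  proof -
    fix y assume y: "y \<in> S"
    have d1: "(Xf g 1 has_vector_derivative (of_nat (Suc 0) * (Xf g 0 y * wpow g (Suc 0) y))) (at y within S)"
      using YP[of 0] y by (simp del: Xf.simps(2))
    have "(V has_vector_derivative (0 + c * (of_nat (Suc 0) * (Xf g 0 y * wpow g (Suc 0) y)))) (at y within S)"
      unfolding V_def by (intro has_vector_derivative_add has_vector_derivative_mult_right d1 has_vector_derivative_const)
    then show "(V has_vector_derivative (c * inverse ((g y)^2))) (at y within S)" by (simp add: wpow_def)
  qed
  have fgV: "\<And>x. x \<in> S \<Longrightarrow> f x = g x * V x"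
  proof -
    fix x assume x: "x \<in> S"
    have "f x / g x = V x"
    proof (rule uniq[where F="\<lambda>x. f x / g x" and D="\<lambda>y. c * inverse ((g y)^2)" and a=a and G=V, OF _ _ _ a0])
      fix y assume y: "y \<in> {-a..a}"
      then have yS: "y \<in> S" by (simp add: S_def)
      show "((\<lambda>x. f x / g x) has_vector_derivative c * inverse ((g y)^2)) (at y within {-a..a})"
        using vd_div[OF df[OF yS] dg[OF yS] gnz[OF yS]] Wc[OF yS]
        by (simp add: S_def W_def divide_inverse)
      show "(V has_vector_derivative c * inverse ((g y)^2)) (at y within {-a..a})"
        using dV[OF yS] by (simp add: S_def)
    next
      show "f 0 / g 0 = V 0" by (simp add: assms(7,8) V_def)
      show "x \<in> {-a..a}" using x S_def by simp
    qed
    then show "f x = g x * V x" using gnz[OF x] by (simp add: field_simps)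
  qed
  have Vnz: "\<And>x. x \<in> S \<Longrightarrow> V x \<noteq> 0" using fgV fnz by force
  have dY: "\<And>n y. y \<in> S \<Longrightarrow> (Xf g (Suc n) has_vector_derivative of_nat (Suc n) * (Xf g n y * wpow g (Suc n) y)) (at y within S)"
    using YP by blast
  have dZ: "\<And>n y. y \<in> S \<Longrightarrow> (Xt g (Suc n) has_vector_derivative of_nat (Suc n) * (Xt g n y * wpow g n y)) (at y within S)"
    using ZP by blast
  have dYf: "\<And>n y. y \<in> S \<Longrightarrow> (Xf f (Suc n) has_vector_derivative of_nat (Suc n) * (Xf f n y * wpow f (Suc n) y)) (at y within S)"
    using XfP by blast
  have dZf: "\<And>n y. y \<in> S \<Longrightarrow> (Xt f (Suc n) has_vector_derivative of_nat (Suc n) * (Xt f n y * wpow f n y)) (at y within S)"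
    using XtP by blast
  have nz1: "\<And>n. (of_nat n + 1 :: complex) \<noteq> 0" "\<And>n. (1 + of_nat n :: complex) \<noteq> 0"
    by (metis of_nat_Suc of_nat_eq_0_iff nat.distinct(1) add.commute)+
  have Sa: "S = {-a..a}" by (simp add: S_def)
  have P: "\<forall>x\<in>S. (odd n \<longrightarrow> Xf f n x = Xf g n x / V x) \<and>
      (even n \<longrightarrow> Xf f n x = V x * Xf g n x - c / of_nat (Suc n) * Xf g (Suc n) x)" for n
  proof (induction n)
    case 0 show ?case by (simp add: V_def)
  next
    case (Suc n)
    show ?case
    proof (cases "even n")
      case True
      have "Xf f (Suc n) x = Xf g (Suc n) x / V x" if x: "x \<in> S" for x
      proof (rule uniq[where F="Xf f (Suc n)" and G="\<lambda>x. Xf g (Suc n) x / V x"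
            and D="\<lambda>y. of_nat (Suc n) * (Xf f n y * wpow f (Suc n) y)" and a=a, OF _ _ _ a0])
        fix y assume "y \<in> {-a..a}" then have yS: "y \<in> S" by (simp add: S_def)
        note ih = Suc.IH[rule_format, OF yS]
        have ihE: "Xf f n y = V y * Xf g n y - c / of_nat (Suc n) * Xf g (Suc n) y" using ih True by blast
        show "(Xf f (Suc n) has_vector_derivative of_nat (Suc n) * (Xf f n y * wpow f (Suc n) y)) (at y within {-a..a})"
          using dYf[OF yS] by (simp add: Sa)
        show "((\<lambda>x. Xf g (Suc n) x / V x) has_vector_derivative of_nat (Suc n) * (Xf f n y * wpow f (Suc n) y)) (at y within {-a..a})"
          apply (rule vd_eq[OF vd_div[OF dY[OF yS] dV[OF yS] Vnz[OF yS]], unfolded Sa])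
          using yS True gnz[OF yS] Vnz[OF yS] nz1 by (simp del: Xf.simps of_nat_Suc add: ihE wpow_def fgV field_simps power2_eq_square)
      next
        show "Xf f (Suc n) 0 = Xf g (Suc n) 0 / V 0" by simp
        show "x \<in> {-a..a}" using x Sa by simp
      qed
      then show ?thesis using True by simp
    next
      case False
      have "Xf f (Suc n) x = V x * Xf g (Suc n) x - c / of_nat (Suc (Suc n)) * Xf g (Suc (Suc n)) x" if x: "x \<in> S" for x
      proof (rule uniq[where F="Xf f (Suc n)" and G="\<lambda>x. V x * Xf g (Suc n) x - c / of_nat (Suc (Suc n)) * Xf g (Suc (Suc n)) x"
            and D="\<lambda>y. of_nat (Suc n) * (Xf f n y * wpow f (Suc n) y)" and a=a, OF _ _ _ a0])
        fix y assume "y \<in> {-a..a}" then have yS: "y \<in> S" by (simp add: S_def)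
        note ih = Suc.IH[rule_format, OF yS]
        have ihE: "Xf f n y = Xf g n y / V y" using ih False by blast
        show "(Xf f (Suc n) has_vector_derivative of_nat (Suc n) * (Xf f n y * wpow f (Suc n) y)) (at y within {-a..a})"
          using dYf[OF yS] by (simp add: Sa)
        show "((\<lambda>x. V x * Xf g (Suc n) x - c / of_nat (Suc (Suc n)) * Xf g (Suc (Suc n)) x) has_vector_derivative of_nat (Suc n) * (Xf f n y * wpow f (Suc n) y)) (at y within {-a..a})"
          apply (rule vd_eq[OF has_vector_derivative_diff[OF has_vector_derivative_mult[OF dV[OF yS] dY[OF yS]]
                     has_vector_derivative_mult_right[OF dY[OF yS]]], unfolded Sa])
          using yS False gnz[OF yS] Vnz[OF yS] nz1 by (simp del: Xf.simps of_nat_Suc add: ihE wpow_def fgV field_simps power2_eq_square)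
      next
        show "Xf f (Suc n) 0 = V 0 * Xf g (Suc n) 0 - c / of_nat (Suc (Suc n)) * Xf g (Suc (Suc n)) 0" by simp
        show "x \<in> {-a..a}" using x Sa by simp
      qed
      then show ?thesis using False by simp
    qed
  qed
  have Q: "\<forall>x\<in>S. Xt f (2*m) x = (Xt g (2*m) x + c / of_nat (Suc (2*m)) * Xf g (Suc (2*m)) x) / V x" for m
  proof (induction m)
    case 0 show ?case using Vnz by (simp add: V_def)
  next
    case (Suc m)
    have R: "of_nat (Suc (Suc (2*m))) * Xt f (Suc (2*m)) x = V x * (of_nat (Suc (Suc (2*m))) * Xt g (Suc (2*m)) x + c * Xf g (Suc (Suc (2*m))) x)
        - c * Xt g (Suc (Suc (2*m))) x - c^2 / of_nat (Suc (Suc (Suc (2*m)))) * Xf g (Suc (Suc (Suc (2*m)))) x" if x: "x \<in> S" for x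
    proof (rule uniq[where F="\<lambda>x. of_nat (Suc (Suc (2*m))) * Xt f (Suc (2*m)) x"
          and G="\<lambda>x. V x * (of_nat (Suc (Suc (2*m))) * Xt g (Suc (2*m)) x + c * Xf g (Suc (Suc (2*m))) x)
        - c * Xt g (Suc (Suc (2*m))) x - c^2 / of_nat (Suc (Suc (Suc (2*m)))) * Xf g (Suc (Suc (Suc (2*m)))) x"
          and D="\<lambda>y. of_nat (Suc (Suc (2*m))) * (of_nat (Suc (2*m)) * (Xt f (2*m) y * wpow f (2*m) y))" and a=a, OF _ _ _ a0])
      fix y assume "y \<in> {-a..a}" then have yS: "y \<in> S" by (simp add: S_def)
      have ihE: "Xt f (2*m) y = (Xt g (2*m) y + c / of_nat (Suc (2*m)) * Xf g (Suc (2*m)) y) / V y"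
        using Suc.IH yS by blast
      show "((\<lambda>x. of_nat (Suc (Suc (2*m))) * Xt f (Suc (2*m)) x) has_vector_derivative
          of_nat (Suc (Suc (2*m))) * (of_nat (Suc (2*m)) * (Xt f (2*m) y * wpow f (2*m) y))) (at y within {-a..a})"
        using has_vector_derivative_mult_right[OF dZf[OF yS]] unfolding Sa .
      show "((\<lambda>x. V x * (of_nat (Suc (Suc (2*m))) * Xt g (Suc (2*m)) x + c * Xf g (Suc (Suc (2*m))) x)
        - c * Xt g (Suc (Suc (2*m))) x - c^2 / of_nat (Suc (Suc (Suc (2*m)))) * Xf g (Suc (Suc (Suc (2*m)))) x) has_vector_derivative
          of_nat (Suc (Suc (2*m))) * (of_nat (Suc (2*m)) * (Xt f (2*m) y * wpow f (2*m) y))) (at y within {-a..a})"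
        apply (rule vd_eq[OF has_vector_derivative_diff[OF has_vector_derivative_diff[OF
                 has_vector_derivative_mult[OF dV[OF yS] has_vector_derivative_add[OF
                   has_vector_derivative_mult_right[OF dZ[OF yS]] has_vector_derivative_mult_right[OF dY[OF yS]]]]
                 has_vector_derivative_mult_right[OF dZ[OF yS]]]
               has_vector_derivative_mult_right[OF dY[OF yS]]], unfolded Sa])
        unfolding ihE using yS gnz[OF yS] Vnz[OF yS]
        by (simp del: Xf.simps Xt.simps of_nat_Suc add: ihE wpow_def fgV field_simps power2_eq_square)
    next
      show "of_nat (Suc (Suc (2*m))) * Xt f (Suc (2*m)) 0 = V 0 * (of_nat (Suc (Suc (2*m))) * Xt g (Suc (2*m)) 0 + c * Xf g (Suc (Suc (2*m))) 0)
        - c * Xt g (Suc (Suc (2*m))) 0 - c^2 / of_nat (Suc (Suc (Suc (2*m)))) * Xf g (Suc (Suc (Suc (2*m)))) 0"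
        by (simp del: of_nat_Suc)
      show "x \<in> {-a..a}" using x Sa by simp
    qed
    have "Xt f (Suc (Suc (2*m))) x = (Xt g (Suc (Suc (2*m))) x + c / of_nat (Suc (Suc (Suc (2*m)))) * Xf g (Suc (Suc (Suc (2*m)))) x) / V x"
      if x: "x \<in> S" for x
    proof (rule uniq[where F="Xt f (Suc (Suc (2*m)))"
          and G="\<lambda>x. (Xt g (Suc (Suc (2*m))) x + c / of_nat (Suc (Suc (Suc (2*m)))) * Xf g (Suc (Suc (Suc (2*m)))) x) / V x"
          and D="\<lambda>y. of_nat (Suc (Suc (2*m))) * (Xt f (Suc (2*m)) y * wpow f (Suc (2*m)) y)" and a=a, OF _ _ _ a0])
      fix y assume "y \<in> {-a..a}" then have yS: "y \<in> S" by (simp add: S_def)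
      have nz: "(of_nat (Suc (Suc (2*m))) :: complex) \<noteq> 0" by (simp only: of_nat_eq_0_iff nat.distinct(1) not_False_eq_True)
      have RE: "Xt f (Suc (2*m)) y = (V y * (of_nat (Suc (Suc (2*m))) * Xt g (Suc (2*m)) y + c * Xf g (Suc (Suc (2*m))) y)
        - c * Xt g (Suc (Suc (2*m))) y - c^2 / of_nat (Suc (Suc (Suc (2*m)))) * Xf g (Suc (Suc (Suc (2*m)))) y) / of_nat (Suc (Suc (2*m)))"
        using R[OF yS] nz by (simp del: Xf.simps Xt.simps of_nat_Suc add: field_simps)
      show "(Xt f (Suc (Suc (2*m))) has_vector_derivative of_nat (Suc (Suc (2*m))) * (Xt f (Suc (2*m)) y * wpow f (Suc (2*m)) y)) (at y within {-a..a})"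
        using dZf[OF yS] unfolding Sa .
      show "((\<lambda>x. (Xt g (Suc (Suc (2*m))) x + c / of_nat (Suc (Suc (Suc (2*m)))) * Xf g (Suc (Suc (Suc (2*m)))) x) / V x) has_vector_derivative
           of_nat (Suc (Suc (2*m))) * (Xt f (Suc (2*m)) y * wpow f (Suc (2*m)) y)) (at y within {-a..a})"
        apply (rule vd_eq[OF vd_div[OF has_vector_derivative_add[OF dZ[OF yS] has_vector_derivative_mult_right[OF dY[OF yS]]] dV[OF yS] Vnz[OF yS]], unfolded Sa])
        unfolding RE using yS gnz[OF yS] Vnz[OF yS] nz
        by (simp del: Xf.simps Xt.simps of_nat_Suc add: RE wpow_def fgV field_simps power2_eq_square)
    next
      show "Xt f (Suc (Suc (2*m))) 0 = (Xt g (Suc (Suc (2*m))) 0 + c / of_nat (Suc (Suc (Suc (2*m)))) * Xf g (Suc (Suc (Suc (2*m)))) 0) / V 0"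
        by (simp del: of_nat_Suc)
      show "x \<in> {-a..a}" using x Sa by simp
    qed
    then show ?case by simp
  qed
  show ?thesis
  proof (intro conjI allI impI ballI)
    fix k :: nat and x :: real assume k: "odd k" and x: "x \<in> {-a..a}"
    then have xS: "x \<in> S" by (simp add: Sa)
    have "Xf f k x = Xf g k x / V x" using P[of k] k xS by blast
    then show "phi f k x = phi g k x" using k Vnz[OF xS] by (simp add: phi_def fgV[OF xS])
  next
    fix k :: nat and x :: real assume k: "even k" and x: "x \<in> {-a..a}"
    then have xS: "x \<in> S" by (simp add: Sa)
    obtain m where km: "k = 2*m" using k by blast
    have "Xt f k x = (Xt g k x + c / of_nat (Suc k) * Xf g (Suc k) x) / V x" using Q[of m] km xS by blast
    then have h: "Xt f k x * V x = Xt g k x + c / (of_nat k + 1) * Xf g (Suc k) x"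
      using Vnz[OF xS] by (simp del: Xf.simps Xt.simps add: field_simps)
    have "phi f k x = g x * (Xt f k x * V x)" using k by (simp add: phi_def fgV[OF xS] mult_ac)
    also have "\<dots> = g x * (Xt g k x + c / (of_nat k + 1) * Xf g (Suc k) x)" by (simp only: h)
    also have "\<dots> = phi g k x + c / (of_nat k + 1) * phi g (Suc k) x" using k by (simp add: phi_def algebra_simps)
    finally show "phi f k x = phi g k x + (f1 0 - g1 0) / (of_nat k + 1) * phi g (Suc k) x" unfolding c_def .
  qed
qed

end
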